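(* Let $S$ be an inverse semigroup that is a mirror semigroup, with semilattice of idempotents $\Sigma=\Sigma(S)$. Then $(S,\leqslant)$ is continuous (resp. algebraic) if and only if $(\Sigma,\leqslant)$ is continuous (resp. algebraic).
   Context: An inverse semigroup is a semigroup $S$ in which every $s$ has a unique $s^*$ with $ss^*s=s$ and $s^*ss^*=s^*$. $\Sigma(S)$ is the set of idempotents. The intrinsic order is $s\leqslant t$ iff $s=t\epsilon$ for some idempotent $\epsilon$. A subset is directed if nonempty and any two elements have an upper bound in it. $S$ is a mirror semigroup if every directed subset of $\Sigma$ having a supremum in $(\Sigma,\leqslant)$ also has a supremum in $(S,\leqslant)$. In a poset, $x$ is way-below $y$ ($x\ll y$) if for every directed subset $D$ that has a supremum with $y\leqslant \sup D$, there is $d\in D$ with $x\leqslant d$. A poset is continuous if for every $s$ the set $\{t : t\ll s\}$ is directed with supremum $s$. An element $k$ is compact if $k\ll k$; a poset is algebraic if every element is the supremum of the directed set of compact elements below it. (The way-below relation, continuity and algebraicity of $\Sigma$ are taken with respect to the poset $(\Sigma,\leqslant)$ itself.) *)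

theory Defs
  imports Main
begin

definition inverse_semigroup :: "('a \<Rightarrow> 'a \<Rightarrow> 'a) \<Rightarrow> bool" where
  "inverse_semigroup m \<longleftrightarrow>
     (\<forall>x y z. m (m x y) z = m x (m y z)) \<and>
     (\<forall>s. \<exists>!t. m (m s t) s = s \<and> m (m t s) t = t)"

definition idems :: "('a \<Rightarrow> 'a \<Rightarrow> 'a) \<Rightarrow> 'a set" where
  "idems m = {e. m e e = e}"

definition nat_le :: "('a \<Rightarrow> 'a \<Rightarrow> 'a) \<Rightarrow> 'a \<Rightarrow> 'a \<Rightarrow> bool" where
  "nat_le m s t \<longleftrightarrow> (\<exists>e\<in>idems m. s = m t e)"

definition directed_in :: "'a set \<Rightarrow> ('a \<Rightarrow> 'a \<Rightarrow> bool) \<Rightarrow> 'a set \<Rightarrow> bool" where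
  "directed_in P le D \<longleftrightarrow> D \<noteq> {} \<and> D \<subseteq> P \<and>
     (\<forall>x\<in>D. \<forall>y\<in>D. \<exists>z\<in>D. le x z \<and> le y z)"

definition is_sup_in :: "'a set \<Rightarrow> ('a \<Rightarrow> 'a \<Rightarrow> bool) \<Rightarrow> 'a set \<Rightarrow> 'a \<Rightarrow> bool" where
  "is_sup_in P le D s \<longleftrightarrow> s \<in> P \<and> (\<forall>d\<in>D. le d s) \<and>
     (\<forall>u\<in>P. (\<forall>d\<in>D. le d u) \<longrightarrow> le s u)"

definition has_sup_in :: "'a set \<Rightarrow> ('a \<Rightarrow> 'a \<Rightarrow> bool) \<Rightarrow> 'a set \<Rightarrow> bool" where
  "has_sup_in P le D \<longleftrightarrow> (\<exists>s. is_sup_in P le D s)"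

definition way_below_in :: "'a set \<Rightarrow> ('a \<Rightarrow> 'a \<Rightarrow> bool) \<Rightarrow> 'a \<Rightarrow> 'a \<Rightarrow> bool" where
  "way_below_in P le x y \<longleftrightarrow>
     (\<forall>D s. directed_in P le D \<and> is_sup_in P le D s \<and> le y s \<longrightarrow> (\<exists>d\<in>D. le x d))"

definition continuous_in :: "'a set \<Rightarrow> ('a \<Rightarrow> 'a \<Rightarrow> bool) \<Rightarrow> bool" where
  "continuous_in P le \<longleftrightarrow>
     (\<forall>s\<in>P. directed_in P le {t\<in>P. way_below_in P le t s} \<and>
             is_sup_in P le {t\<in>P. way_below_in P le t s} s)"

definition compact_in :: "'a set \<Rightarrow> ('a \<Rightarrow> 'a \<Rightarrow> bool) \<Rightarrow> 'a \<Rightarrow> bool" where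
  "compact_in P le k \<longleftrightarrow> way_below_in P le k k"

definition algebraic_in :: "'a set \<Rightarrow> ('a \<Rightarrow> 'a \<Rightarrow> bool) \<Rightarrow> bool" where
  "algebraic_in P le \<longleftrightarrow>
     (\<forall>s\<in>P. directed_in P le {k\<in>P. compact_in P le k \<and> le k s} \<and>
             is_sup_in P le {k\<in>P. compact_in P le k \<and> le k s} s)"

definition mirror_semigroup :: "('a \<Rightarrow> 'a \<Rightarrow> 'a) \<Rightarrow> bool" where
  "mirror_semigroup m \<longleftrightarrow>
     (\<forall>D. directed_in (idems m) (nat_le m) D \<and> has_sup_in (idems m) (nat_le m) D
          \<longrightarrow> has_sup_in UNIV (nat_le m) D)"

end

theory Submission
  imports Defs
begin

locale invsg =
  fixes m :: "'a \<Rightarrow> 'a \<Rightarrow> 'a" (infixl "\<odot>" 70)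
  assumes assoc: "(x \<odot> y) \<odot> z = x \<odot> (y \<odot> z)"
    and uniq: "\<exists>!t. (s \<odot> t) \<odot> s = s \<and> (t \<odot> s) \<odot> t = t"
begin

definition iv where "iv s = (THE t. (s \<odot> t) \<odot> s = s \<and> (t \<odot> s) \<odot> t = t)"

lemma iv: "(s \<odot> iv s) \<odot> s = s" "(iv s \<odot> s) \<odot> iv s = iv s"
  using theI'[OF uniq[of s]] unfolding iv_def by auto

lemma iv_unique: "(s \<odot> t) \<odot> s = s \<Longrightarrow> (t \<odot> s) \<odot> t = t \<Longrightarrow> iv s = t"
  using uniq[of s] iv[of s] by blast

lemma iv1[simp]: "s \<odot> (iv s \<odot> s) = s" using iv(1) by (simp add: assoc)
lemma iv2[simp]: "iv s \<odot> (s \<odot> iv s) = iv s" using iv(2) by (simp add: assoc)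
lemma iv1'[simp]: "s \<odot> (iv s \<odot> (s \<odot> z)) = s \<odot> z" by (metis iv1 assoc)
lemma ivh2[simp]: "iv s \<odot> (s \<odot> (iv s \<odot> z)) = iv s \<odot> z" by (metis iv2 assoc)

lemma iv_iv[simp]: "iv (iv s) = s" by (rule iv_unique) (simp_all add: assoc)

definition idem where "idem e \<longleftrightarrow> e \<odot> e = e"

lemma idem_left: "idem e \<Longrightarrow> e \<odot> (e \<odot> z) = e \<odot> z"
  by (metis assoc idem_def)

lemma iv_idem: "idem e \<Longrightarrow> iv e = e"
  by (rule iv_unique) (simp_all add: idem_def)

lemma iv_mult_idem_aux:
  assumes "idem e" "idem f" shows "idem (e \<odot> f)"
proof -
  let ?x = "iv (e \<odot> f)"
  define y where "y = f \<odot> (?x \<odot> e)"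
  have 1: "e \<odot> (f \<odot> (?x \<odot> (e \<odot> f))) = e \<odot> f" using iv(1)[of "e\<odot>f"] by (simp only: assoc)
  have 2: "?x \<odot> (e \<odot> (f \<odot> ?x)) = ?x" using iv(2)[of "e\<odot>f"] by (simp only: assoc)
  have h2: "?x \<odot> (e \<odot> (f \<odot> (?x \<odot> z))) = ?x \<odot> z" for z by (metis 2 assoc)
  have "iv (e \<odot> f) = y"
  proof (rule iv_unique)
    show "e \<odot> f \<odot> y \<odot> (e \<odot> f) = e \<odot> f"
      using 1 assms by (simp add: y_def assoc idem_left)
    show "y \<odot> (e \<odot> f) \<odot> y = y"
      using h2 assms by (simp add: y_def assoc idem_left)
  qed
  hence eq: "?x = y" .
  have "y \<odot> y = y" by (simp add: y_def assoc h2)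
  hence "idem ?x" using eq by (simp add: idem_def)
  hence "iv ?x = ?x" by (rule iv_idem)
  thus ?thesis using \<open>idem ?x\<close> by simp
qed

lemma idem_comm: assumes "idem e" "idem f" shows "e \<odot> f = f \<odot> e"
proof -
  have a: "idem (e \<odot> f)" "idem (f \<odot> e)" using assms iv_mult_idem_aux by auto
  have "iv (e \<odot> f) = f \<odot> e"
    apply (rule iv_unique)
    using a assms by (simp_all add: assoc idem_left idem_def)
  thus ?thesis using iv_idem[OF a(1)] by simp
qed

lemma idem_comm': assumes "idem e" "idem f" shows "e \<odot> (f \<odot> z) = f \<odot> (e \<odot> z)"
  by (metis assms idem_comm assoc)

lemma idem_mult: "idem e \<Longrightarrow> idem f \<Longrightarrow> idem (e \<odot> f)" by (rule iv_mult_idem_aux)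

lemma idem_ivs[simp]: "idem (iv s \<odot> s)" "idem (s \<odot> iv s)"
  unfolding idem_def by (simp_all add: assoc)

lemma iv_mult: "iv (a \<odot> b) = iv b \<odot> iv a"
proof (rule iv_unique)
  have c: "b \<odot> iv b \<odot> (iv a \<odot> a) = iv a \<odot> a \<odot> (b \<odot> iv b)" by (rule idem_comm) simp_all
  show "a \<odot> b \<odot> (iv b \<odot> iv a) \<odot> (a \<odot> b) = a \<odot> b"
    by (metis c assoc iv1 iv1')
  show "iv b \<odot> iv a \<odot> (a \<odot> b) \<odot> (iv b \<odot> iv a) = iv b \<odot> iv a"
    by (metis c assoc iv2 ivh2)
qed


lemma idems_iff: "e \<in> idems m \<longleftrightarrow> idem e" by (simp add: idems_def idem_def)

lemma le_iff: "nat_le m t s \<longleftrightarrow> (\<exists>e. idem e \<and> t = s \<odot> e)"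
  by (auto simp: nat_le_def idems_iff)

lemma sq_of_le: assumes "idem e" shows "iv (s \<odot> e) \<odot> (s \<odot> e) = iv s \<odot> (s \<odot> e)"
proof -
  have "iv (s \<odot> e) \<odot> (s \<odot> e) = e \<odot> (iv s \<odot> s) \<odot> e"
    by (simp add: iv_mult iv_idem assms assoc)
  also have "\<dots> = iv s \<odot> s \<odot> e \<odot> e" using idem_comm[OF assms idem_ivs(1)[of s]] by simp
  also have "\<dots> = iv s \<odot> (s \<odot> e)" using assms by (simp add: assoc idem_def)
  finally show ?thesis .
qed

lemma le_char: "nat_le m t s \<longleftrightarrow> t = s \<odot> (iv t \<odot> t)"
proof
  assume "nat_le m t s"
  then obtain e where e: "idem e" "t = s \<odot> e" by (auto simp: le_iff)
  show "t = s \<odot> (iv t \<odot> t)" using sq_of_le[OF e(1)] e(2) by simp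
next
  assume "t = s \<odot> (iv t \<odot> t)" thus "nat_le m t s" unfolding le_iff by (metis idem_ivs(1))
qed

lemma le_refl: "nat_le m s s" using le_char by simp

lemma le_trans: "nat_le m t s \<Longrightarrow> nat_le m s r \<Longrightarrow> nat_le m t r"
  unfolding le_iff by (metis assoc idem_mult)

lemma le_antisym: "nat_le m t s \<Longrightarrow> nat_le m s t \<Longrightarrow> t = s"
  unfolding le_iff by (metis assoc idem_comm idem_def)

lemma le_idem: "nat_le m t e \<Longrightarrow> idem e \<Longrightarrow> idem t"
  unfolding le_iff using idem_mult by blast

lemma le_idem_iff: "idem e \<Longrightarrow> idem f \<Longrightarrow> nat_le m e f \<longleftrightarrow> e = f \<odot> e"
  unfolding le_iff by (metis idem_left)

lemma le_left: assumes "idem g" shows "nat_le m (g \<odot> s) s"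
proof -
  have "s \<odot> (iv s \<odot> (g \<odot> s)) = g \<odot> s"
    using idem_comm[OF idem_ivs(2)[of s] assms] by (metis assoc iv1)
  moreover have "idem (iv s \<odot> (g \<odot> s))"
    using idem_comm[OF idem_ivs(2)[of s] assms] assms unfolding idem_def
    by (metis assoc iv1)
  ultimately show ?thesis unfolding le_iff by metis
qed

lemma le_sq: "nat_le m t s \<Longrightarrow> nat_le m (iv t \<odot> t) (iv s \<odot> s)"
  unfolding le_iff by (metis sq_of_le assoc)

lemma idem_le_sq: assumes "idem f" "nat_le m f u" shows "nat_le m f (iv u \<odot> u)"
proof -
  obtain e where e: "idem e" "f = u \<odot> e" using assms(2) by (auto simp: le_iff)
  have "f = iv f \<odot> f" using assms(1) by (simp add: iv_idem idem_def)
  also have "\<dots> = iv u \<odot> u \<odot> e" using sq_of_le[OF e(1)] e(2) by (simp add: assoc)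
  finally show ?thesis using e(1) unfolding le_iff by blast
qed

lemma idem_sq_eq: "idem e \<Longrightarrow> iv e \<odot> e = e" by (simp add: iv_idem idem_def)

end

locale mirr = invsg + assumes mir: "mirror_semigroup m"
begin

lemma wb_le: assumes "y \<in> P" "way_below_in P (nat_le m) x y" shows "nat_le m x y"
proof -
  have "directed_in P (nat_le m) {y}" using assms(1) le_refl by (auto simp: directed_in_def)
  moreover have "is_sup_in P (nat_le m) {y} y" using assms(1) le_refl by (auto simp: is_sup_in_def)
  ultimately show ?thesis using assms(2) le_refl unfolding way_below_in_def by blast
qed

lemma sup_up: assumes "directed_in (idems m) (nat_le m) D" "is_sup_in (idems m) (nat_le m) D g"
  shows "is_sup_in UNIV (nat_le m) D g"
proof -
  obtain u where u: "is_sup_in UNIV (nat_le m) D u"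
    using mir assms unfolding mirror_semigroup_def has_sup_in_def by blast
  have g: "g \<in> idems m" "\<forall>d\<in>D. nat_le m d g" using assms(2) by (auto simp: is_sup_in_def)
  have "nat_le m u g" using u g by (auto simp: is_sup_in_def)
  hence "u \<in> idems m" using g(1) le_idem idems_iff by blast
  hence "nat_le m g u" using u assms(2) by (auto simp: is_sup_in_def)
  hence "u = g" using \<open>nat_le m u g\<close> le_antisym by blast
  thus ?thesis using u by simp
qed

lemma dir_univ: "directed_in P (nat_le m) D \<Longrightarrow> directed_in UNIV (nat_le m) D"
  by (auto simp: directed_in_def)

lemma sq_sup: assumes "directed_in UNIV (nat_le m) D" "is_sup_in UNIV (nat_le m) D u"
  shows "directed_in (idems m) (nat_le m) ((\<lambda>d. iv d \<odot> d) ` D) \<and>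
         is_sup_in (idems m) (nat_le m) ((\<lambda>d. iv d \<odot> d) ` D) (iv u \<odot> u)"
proof
  show "directed_in (idems m) (nat_le m) ((\<lambda>d. iv d \<odot> d) ` D)"
    using assms(1) unfolding directed_in_def by (auto simp: idems_iff intro: le_sq) (metis le_sq)
  have ub: "\<forall>d\<in>D. nat_le m d u" using assms(2) by (simp add: is_sup_in_def)
  have "nat_le m (iv u \<odot> u) g" if g: "g \<in> idems m" "\<forall>x\<in>(\<lambda>d. iv d \<odot> d) ` D. nat_le m x g" for g
  proof -
    have gi: "idem g" using g(1) idems_iff by blast
    have "nat_le m d (u \<odot> g)" if d: "d \<in> D" for d
    proof -
      have "d = u \<odot> (iv d \<odot> d)" using ub d le_char by blast
      moreover have "iv d \<odot> d = g \<odot> (iv d \<odot> d)" using g(2) d le_idem_iff[OF _ gi] by simp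
      ultimately have "d = (u \<odot> g) \<odot> (iv d \<odot> d)" by (metis assoc)
      thus ?thesis unfolding le_iff by (metis idem_ivs(1))
    qed
    hence "nat_le m u (u \<odot> g)" using assms(2) by (auto simp: is_sup_in_def)
    moreover have "nat_le m (u \<odot> g) u" using gi le_iff by blast
    ultimately have "u \<odot> g = u" using le_antisym by blast
    hence "iv u \<odot> u = g \<odot> (iv u \<odot> u)" using idem_comm[OF idem_ivs(1)[of u] gi] by (metis assoc)
    thus ?thesis using le_idem_iff[OF idem_ivs(1) gi] by simp
  qed
  moreover have "\<forall>x\<in>(\<lambda>d. iv d \<odot> d) ` D. nat_le m x (iv u \<odot> u)" using ub le_sq by auto
  ultimately show "is_sup_in (idems m) (nat_le m) ((\<lambda>d. iv d \<odot> d) ` D) (iv u \<odot> u)"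
    unfolding is_sup_in_def by (auto simp: idems_iff)
qed

lemma L3: assumes "nat_le m t s" "way_below_in (idems m) (nat_le m) (iv t \<odot> t) (iv s \<odot> s)"
  shows "way_below_in UNIV (nat_le m) t s"
  unfolding way_below_in_def
proof (intro allI impI, elim conjE)
  fix D u assume D: "directed_in UNIV (nat_le m) D" "is_sup_in UNIV (nat_le m) D u" "nat_le m s u"
  note sq = sq_sup[OF D(1,2)]
  have "nat_le m (iv s \<odot> s) (iv u \<odot> u)" using D(3) le_sq by blast
  then obtain d where d: "d \<in> D" "nat_le m (iv t \<odot> t) (iv d \<odot> d)"
    using assms(2) sq unfolding way_below_in_def by blast
  have du: "nat_le m d u" using D(2) d(1) by (auto simp: is_sup_in_def)
  have tu: "nat_le m t u" using le_trans assms(1) D(3) by blast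
  have "t = u \<odot> (iv t \<odot> t)" using tu le_char by blast
  also have "\<dots> = u \<odot> (iv d \<odot> d \<odot> (iv t \<odot> t))" using d(2) le_idem_iff[OF idem_ivs(1) idem_ivs(1)] by metis
  also have "\<dots> = d \<odot> (iv t \<odot> t)" using du le_char by (metis assoc)
  finally show "\<exists>d\<in>D. nat_le m t d" using d(1) le_iff by (metis idem_ivs(1))
qed

lemma L2: assumes "e \<in> idems m" "f \<in> idems m"
  shows "way_below_in UNIV (nat_le m) e f \<longleftrightarrow> way_below_in (idems m) (nat_le m) e f"
proof
  assume w: "way_below_in UNIV (nat_le m) e f"
  show "way_below_in (idems m) (nat_le m) e f"
    unfolding way_below_in_def
  proof (intro allI impI, elim conjE)
    fix D x assume D: "directed_in (idems m) (nat_le m) D" "is_sup_in (idems m) (nat_le m) D x" "nat_le m f x"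
    show "\<exists>d\<in>D. nat_le m e d" using w sup_up[OF D(1,2)] dir_univ[OF D(1)] D(3)
      unfolding way_below_in_def by blast
  qed
next
  assume w: "way_below_in (idems m) (nat_le m) e f"
  have ei: "idem e" "idem f" using assms idems_iff by auto
  show "way_below_in UNIV (nat_le m) e f"
    using L3[of e f] wb_le[OF assms(2) w] w idem_sq_eq[OF ei(1)] idem_sq_eq[OF ei(2)] by simp
qed

lemma L_mult: assumes "directed_in (idems m) (nat_le m) E" "is_sup_in (idems m) (nat_le m) E (iv s \<odot> s)"
  shows "directed_in UNIV (nat_le m) ((\<lambda>e. s \<odot> e) ` E) \<and> is_sup_in UNIV (nat_le m) ((\<lambda>e. s \<odot> e) ` E) s"
proof
  have Ei: "\<forall>e\<in>E. idem e" using assms(1) by (auto simp: directed_in_def idems_iff)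
  show "directed_in UNIV (nat_le m) ((\<lambda>e. s \<odot> e) ` E)"
    using assms(1) unfolding directed_in_def le_iff by (auto, metis assoc)
  let ?f = "iv s \<odot> s"
  have fE: "\<forall>e\<in>E. e = ?f \<odot> e" using assms(2) Ei le_idem_iff[OF _ idem_ivs(1)]
    by (auto simp: is_sup_in_def)
  have "nat_le m s v" if v: "\<forall>x\<in>(\<lambda>e. s \<odot> e) ` E. nat_le m x v" for v
  proof -
    have "nat_le m e (iv s \<odot> v)" if e: "e \<in> E" for e
    proof -
      have "s \<odot> e = v \<odot> (iv (s \<odot> e) \<odot> (s \<odot> e))" using v e le_char by blast
      also have "\<dots> = v \<odot> e" using sq_of_le[of e s] Ei e fE by (simp add: assoc)
      finally have "iv s \<odot> v \<odot> e = ?f \<odot> e" by (simp add: assoc)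
      hence "e = iv s \<odot> v \<odot> e" using fE e by simp
      thus ?thesis using Ei e le_iff by blast
    qed
    hence "nat_le m ?f (iv s \<odot> v)" using sup_up[OF assms] by (auto simp: is_sup_in_def)
    hence "?f = iv s \<odot> v \<odot> ?f" using le_char idem_sq_eq[OF idem_ivs(1)] by metis
    hence "s = (s \<odot> iv s) \<odot> (v \<odot> ?f)" by (metis assoc iv1)
    hence "nat_le m s (v \<odot> ?f)" using le_left[OF idem_ivs(2)] by metis
    moreover have "nat_le m (v \<odot> ?f) v" using le_iff idem_ivs(1) by blast
    ultimately show ?thesis using le_trans by blast
  qed
  moreover have "\<forall>x\<in>(\<lambda>e. s \<odot> e) ` E. nat_le m x s" using Ei le_iff by auto
  ultimately show "is_sup_in UNIV (nat_le m) ((\<lambda>e. s \<odot> e) ` E) s" by (auto simp: is_sup_in_def)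
qed


lemma cont1: assumes "continuous_in UNIV (nat_le m)" shows "continuous_in (idems m) (nat_le m)"
  unfolding continuous_in_def
proof
  fix e assume e: "e \<in> idems m"
  have eq: "{t\<in>UNIV. way_below_in UNIV (nat_le m) t e} = {t\<in>idems m. way_below_in (idems m) (nat_le m) t e}"
  proof -
    have "t \<in> idems m" if "way_below_in UNIV (nat_le m) t e" for t
      using wb_le[OF _ that] e le_idem idems_iff by blast
    thus ?thesis using L2 e by blast
  qed
  have "directed_in UNIV (nat_le m) {t\<in>UNIV. way_below_in UNIV (nat_le m) t e}"
    "is_sup_in UNIV (nat_le m) {t\<in>UNIV. way_below_in UNIV (nat_le m) t e} e"
    using assms unfolding continuous_in_def by auto
  thus "directed_in (idems m) (nat_le m) {t\<in>idems m. way_below_in (idems m) (nat_le m) t e} \<and>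
        is_sup_in (idems m) (nat_le m) {t\<in>idems m. way_below_in (idems m) (nat_le m) t e} e"
    unfolding eq using e by (auto simp: directed_in_def is_sup_in_def)
qed

lemma alg1: assumes "algebraic_in UNIV (nat_le m)" shows "algebraic_in (idems m) (nat_le m)"
  unfolding algebraic_in_def
proof
  fix e assume e: "e \<in> idems m"
  have eq: "{k\<in>UNIV. compact_in UNIV (nat_le m) k \<and> nat_le m k e} = {k\<in>idems m. compact_in (idems m) (nat_le m) k \<and> nat_le m k e}"
  proof -
    have "k \<in> idems m" if "nat_le m k e" for k
      using that e le_idem idems_iff by blast
    thus ?thesis using L2 e unfolding compact_in_def by blast
  qed
  have "directed_in UNIV (nat_le m) {k\<in>UNIV. compact_in UNIV (nat_le m) k \<and> nat_le m k e}"
    "is_sup_in UNIV (nat_le m) {k\<in>UNIV. compact_in UNIV (nat_le m) k \<and> nat_le m k e} e"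
    using assms unfolding algebraic_in_def by auto
  thus "directed_in (idems m) (nat_le m) {k\<in>idems m. compact_in (idems m) (nat_le m) k \<and> nat_le m k e} \<and>
        is_sup_in (idems m) (nat_le m) {k\<in>idems m. compact_in (idems m) (nat_le m) k \<and> nat_le m k e} e"
    unfolding eq using e by (auto simp: directed_in_def is_sup_in_def)
qed

lemma cont2: assumes "continuous_in (idems m) (nat_le m)" shows "continuous_in UNIV (nat_le m)"
  unfolding continuous_in_def
proof
  fix s :: 'a
  let ?f = "iv s \<odot> s"
  let ?E = "{e\<in>idems m. way_below_in (idems m) (nat_le m) e ?f}"
  let ?W' = "(\<lambda>e. s \<odot> e) ` ?E"
  let ?W = "{t\<in>UNIV. way_below_in UNIV (nat_le m) t s}"
  have f: "?f \<in> idems m" by (simp add: idems_iff)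
  have E: "directed_in (idems m) (nat_le m) ?E" "is_sup_in (idems m) (nat_le m) ?E ?f"
    using assms f unfolding continuous_in_def by auto
  note W' = L_mult[OF E]
  have sub: "?W' \<subseteq> ?W"
  proof
    fix x assume "x \<in> ?W'"
    then obtain e where e: "e \<in> ?E" "x = s \<odot> e" by blast
    have ei: "idem e" using e idems_iff by auto
    have "nat_le m e ?f" using wb_le[OF f] e by auto
    hence "e = ?f \<odot> e" using le_idem_iff[OF ei idem_ivs(1)] by simp
    hence "iv x \<odot> x = e" using sq_of_le[OF ei, of s] e(2) by (simp add: assoc)
    moreover have "nat_le m x s" using e(2) ei le_iff by blast
    ultimately show "x \<in> ?W" using L3[of x s] e by auto
  qed
  have up: "\<exists>w\<in>?W'. nat_le m t w" if "t \<in> ?W" for t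
    using that W' le_refl unfolding way_below_in_def by blast
  have "directed_in UNIV (nat_le m) ?W"
    unfolding directed_in_def
  proof (intro conjI ballI)
    show "?W \<noteq> {}" using sub W' by (auto simp: directed_in_def)
  next
    fix x y assume xy: "x \<in> ?W" "y \<in> ?W"
    obtain w1 w2 where w: "w1 \<in> ?W'" "w2 \<in> ?W'" "nat_le m x w1" "nat_le m y w2"
      using up xy by meson
    then obtain w3 where "w3 \<in> ?W'" "nat_le m w1 w3" "nat_le m w2 w3"
      using W' unfolding directed_in_def by meson
    thus "\<exists>z\<in>?W. nat_le m x z \<and> nat_le m y z" using sub w le_trans by blast
  qed simp
  moreover have "is_sup_in UNIV (nat_le m) ?W s"
    unfolding is_sup_in_def
  proof (intro conjI ballI impI)
    show "nat_le m d s" if "d \<in> ?W" for d using wb_le[of s UNIV d] that by simp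
    show "nat_le m s u" if "\<forall>d\<in>?W. nat_le m d u" for u
    proof -
      have "\<forall>x\<in>?W'. nat_le m x u" using that sub by blast
      thus ?thesis using W'[THEN conjunct2] unfolding is_sup_in_def by blast
    qed
  qed simp
  ultimately show "directed_in UNIV (nat_le m) ?W \<and> is_sup_in UNIV (nat_le m) ?W s" by blast
qed

lemma alg2: assumes "algebraic_in (idems m) (nat_le m)" shows "algebraic_in UNIV (nat_le m)"
  unfolding algebraic_in_def
proof
  fix s :: 'a
  let ?f = "iv s \<odot> s"
  let ?E = "{k\<in>idems m. compact_in (idems m) (nat_le m) k \<and> nat_le m k ?f}"
  let ?W' = "(\<lambda>e. s \<odot> e) ` ?E"
  let ?W = "{k\<in>UNIV. compact_in UNIV (nat_le m) k \<and> nat_le m k s}"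
  have f: "?f \<in> idems m" by (simp add: idems_iff)
  have E: "directed_in (idems m) (nat_le m) ?E" "is_sup_in (idems m) (nat_le m) ?E ?f"
    using assms f unfolding algebraic_in_def by auto
  note W' = L_mult[OF E]
  have sub: "?W' \<subseteq> ?W"
  proof
    fix x assume "x \<in> ?W'"
    then obtain e where e: "e \<in> ?E" "x = s \<odot> e" by blast
    have ei: "idem e" using e idems_iff by auto
    have "nat_le m e ?f" using e by auto
    hence "e = ?f \<odot> e" using le_idem_iff[OF ei idem_ivs(1)] by simp
    hence "iv x \<odot> x = e" using sq_of_le[OF ei, of s] e(2) by (simp add: assoc)
    moreover have "nat_le m x s" using e(2) ei le_iff by blast
    ultimately show "x \<in> ?W" using L3[of x x] e le_refl unfolding compact_in_def by auto
  qed
  have up: "\<exists>w\<in>?W'. nat_le m t w" if "t \<in> ?W" for t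
    using that W' unfolding way_below_in_def compact_in_def by blast
  have "directed_in UNIV (nat_le m) ?W"
    unfolding directed_in_def
  proof (intro conjI ballI)
    show "?W \<noteq> {}" using sub W' by (auto simp: directed_in_def)
  next
    fix x y assume xy: "x \<in> ?W" "y \<in> ?W"
    obtain w1 w2 where w: "w1 \<in> ?W'" "w2 \<in> ?W'" "nat_le m x w1" "nat_le m y w2"
      using up xy by meson
    then obtain w3 where "w3 \<in> ?W'" "nat_le m w1 w3" "nat_le m w2 w3"
      using W' unfolding directed_in_def by meson
    thus "\<exists>z\<in>?W. nat_le m x z \<and> nat_le m y z" using sub w le_trans by blast
  qed simp
  moreover have "is_sup_in UNIV (nat_le m) ?W s"
    unfolding is_sup_in_def
  proof (intro conjI ballI impI)
    show "nat_le m d s" if "d \<in> ?W" for d using that by simp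
    show "nat_le m s u" if "\<forall>d\<in>?W. nat_le m d u" for u
    proof -
      have "\<forall>x\<in>?W'. nat_le m x u" using that sub by blast
      thus ?thesis using W'[THEN conjunct2] unfolding is_sup_in_def by blast
    qed
  qed simp
  ultimately show "directed_in UNIV (nat_le m) ?W \<and> is_sup_in UNIV (nat_le m) ?W s" by blast
qed

end

theorem theorem5p3:
  fixes m :: "'a \<Rightarrow> 'a \<Rightarrow> 'a"
  assumes "inverse_semigroup m"
    and "mirror_semigroup m"
  shows "(continuous_in UNIV (nat_le m) \<longleftrightarrow> continuous_in (idems m) (nat_le m)) \<and>
         (algebraic_in UNIV (nat_le m) \<longleftrightarrow> algebraic_in (idems m) (nat_le m))"
proof -
  have a: "\<forall>x y z. m (m x y) z = m x (m y z)" and u: "\<forall>s. \<exists>!t. m (m s t) s = s \<and> m (m t s) t = t"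
    using assms(1) unfolding inverse_semigroup_def by blast+
  interpret mirr m
    apply unfold_locales
    using a apply blast
    using u apply blast
    using assms(2) by blast
  show ?thesis using cont1 cont2 alg1 alg2 by blast
qed

end
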